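(* Let $A$ be a finite alphabet and let $Z\subseteq A^+$ be a code all of whose words have length at least $2$. If all words of $Z$ begin with the same letter of $A$, or all words of $Z$ end with the same letter of $A$, then $Z$ is an alt-induced code.
   Context: $A^+$ is the set of non-empty words over $A$. A set $Z\subseteq A^+$ is a code if every word admits at most one factorization into words of $Z$. For non-empty $X,Y\subseteq A^+$, $(X,Y)$ is an alternative code if no word of $A^+$ admits two different similar alternative factorizations on $(X,Y)$, where an alternative factorization is a factorization $u_1\cdots u_n$ ($n\ge 2$, $u_i\in X\cup Y$) with consecutive factors alternating between $X$ and $Y$, and two are similar if they begin in the same set and end in the same set; equivalently, $XY$ is a code and each $z\in XY$ has exactly one pair $(x,y)\in X\times Y$ with $z=xy$. $Z$ is an alt-induced code if $Z=XY$ for some alternative code $(X,Y)$. *)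

theory Defs
  imports Main
begin

definition plus_words :: "'a set \<Rightarrow> 'a list set" where
  "plus_words A = {w. w \<noteq> [] \<and> set w \<subseteq> A}"

definition is_code :: "'a set \<Rightarrow> 'a list set \<Rightarrow> bool" where
  "is_code A Z \<longleftrightarrow> Z \<subseteq> plus_words A \<and>
     (\<forall>us vs. set us \<subseteq> Z \<and> set vs \<subseteq> Z \<and> concat us = concat vs \<longrightarrow> us = vs)"

definition lang_prod :: "'a list set \<Rightarrow> 'a list set \<Rightarrow> 'a list set" where
  "lang_prod X Y = {x @ y | x y. x \<in> X \<and> y \<in> Y}"

text \<open>Alternative factorization on (X,Y): factors u_0,...,u_{n-1}, n >= 2, alternating
  between X and Y; the flag b says whether it begins in X (True) or in Y (False).  It ends in the same set as another
  alternative factorization with the same starting set iff the lengths have equal parity.\<close>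
definition alt_fact :: "'a list set \<Rightarrow> 'a list set \<Rightarrow> bool \<Rightarrow> 'a list list \<Rightarrow> bool" where
  "alt_fact X Y b us \<longleftrightarrow> length us \<ge> 2 \<and>
     (\<forall>i < length us. us ! i \<in> (if even i = b then X else Y))"

definition alternative_code :: "'a set \<Rightarrow> 'a list set \<Rightarrow> 'a list set \<Rightarrow> bool" where
  "alternative_code A X Y \<longleftrightarrow>
     X \<noteq> {} \<and> Y \<noteq> {} \<and> X \<subseteq> plus_words A \<and> Y \<subseteq> plus_words A \<and>
     (\<forall>b us vs. alt_fact X Y b us \<and> alt_fact X Y b vs \<and>
        even (length us) = even (length vs) \<and> concat us = concat vs \<longrightarrow> us = vs)"

definition alt_induced_code :: "'a set \<Rightarrow> 'a list set \<Rightarrow> bool" where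
  "alt_induced_code A Z \<longleftrightarrow> (\<exists>X Y. alternative_code A X Y \<and> Z = lang_prod X Y)"

end

theory Submission
  imports Defs
begin

definition alt :: "'a list set \<Rightarrow> 'a list set \<Rightarrow> bool \<Rightarrow> 'a list list \<Rightarrow> bool" where
  "alt X Y b us \<longleftrightarrow> (\<forall>i < length us. us ! i \<in> (if even i = b then X else Y))"

lemma alt_Nil[simp]: "alt X Y b []" by (simp add: alt_def)

lemma alt_Cons[simp]: "alt X Y b (u#us) \<longleftrightarrow> u \<in> (if b then X else Y) \<and> alt X Y (\<not>b) us"
  unfolding alt_def
  by (simp only: length_Cons All_less_Suc2 nth_Cons_0 nth_Cons_Suc even_Suc) simp

lemma alt_snoc: "alt X Y b (us@[u]) \<longleftrightarrow> alt X Y b us \<and> u \<in> (if even (length us) = b then X else Y)"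
proof -
  have e: "(\<forall>i<length us. (us @ [u]) ! i \<in> (if even i = b then X else Y)) \<longleftrightarrow>
        (\<forall>i<length us. us ! i \<in> (if even i = b then X else Y))" by (simp add: nth_append)
  have "alt X Y b (us@[u]) \<longleftrightarrow> (\<forall>i<Suc (length us). (us @ [u]) ! i \<in> (if even i = b then X else Y))"
    by (simp add: alt_def)
  also have "\<dots> \<longleftrightarrow> (\<forall>i<length us. (us @ [u]) ! i \<in> (if even i = b then X else Y)) \<and> u \<in> (if even (length us) = b then X else Y)"
    by (simp only: All_less_Suc nth_append_length) blast
  also have "\<dots> \<longleftrightarrow> alt X Y b us \<and> u \<in> (if even (length us) = b then X else Y)"
    using e by (simp add: alt_def)
  finally show ?thesis .
qed

lemma alt_fact_alt: "alt_fact X Y b us \<longleftrightarrow> length us \<ge> 2 \<and> alt X Y b us"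
  by (simp add: alt_fact_def alt_def)

lemma alt_pairs:
  "alt X Y True us \<Longrightarrow> even (length us) \<Longrightarrow>
     \<exists>ps. set ps \<subseteq> X \<times> Y \<and> us = concat (map (\<lambda>(x,y). [x,y]) ps)"
proof (induction us rule: induct_list012)
  case 1 show ?case by (intro exI[of _ "[]"]) simp
next
  case (2 x) then show ?case by simp
next
  case (3 x y zs)
  then obtain ps where "set ps \<subseteq> X \<times> Y" "zs = concat (map (\<lambda>(x,y). [x,y]) ps)" by auto
  with 3 show ?case by (intro exI[of _ "(x,y)#ps"]) auto
qed

lemma concat_pairs: "concat (concat (map (\<lambda>(x,y). [x,y]) ps)) = concat (map (\<lambda>(x,y). x@y) ps)"
  by (induction ps) auto

lemma core:
  assumes inj: "inj_on (\<lambda>(x,y). x@y) (X\<times>Y)" and code: "is_code A (lang_prod X Y)"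
    and "alt X Y True us" "alt X Y True vs" "even (length us)" "even (length vs)"
    and eq: "concat us = concat vs"
  shows "us = vs"
proof -
  obtain ps where ps: "set ps \<subseteq> X \<times> Y" "us = concat (map (\<lambda>(x,y). [x,y]) ps)"
    using alt_pairs assms by blast
  obtain qs where qs: "set qs \<subseteq> X \<times> Y" "vs = concat (map (\<lambda>(x,y). [x,y]) qs)"
    using alt_pairs assms by blast
  have s1: "set (map (\<lambda>(x,y). x@y) ps) \<subseteq> lang_prod X Y" using ps(1) by (auto simp: lang_prod_def)
  have s2: "set (map (\<lambda>(x,y). x@y) qs) \<subseteq> lang_prod X Y" using qs(1) by (auto simp: lang_prod_def)
  have "concat (map (\<lambda>(x,y). x@y) ps) = concat (map (\<lambda>(x,y). x@y) qs)"
    using eq ps(2) qs(2) concat_pairs by metis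
  then have "map (\<lambda>(x,y). x@y) ps = map (\<lambda>(x,y). x@y) qs"
    using code s1 s2 unfolding is_code_def by blast
  then have "ps = qs"
    by (rule map_inj_on) (use inj ps(1) qs(1) in \<open>auto intro: inj_on_subset\<close>)
  then show ?thesis using ps qs by simp
qed

lemma case1:
  assumes inj: "inj_on (\<lambda>(x,y). x@y) ({[a]}\<times>Y)" and code: "is_code A (lang_prod {[a]} Y)"
    and "alt {[a]} Y b us" "alt {[a]} Y b vs" "even (length us) = even (length vs)"
    and eq: "concat us = concat vs"
  shows "us = vs"
proof -
  define us' where "us' = (if b then us else [a]#us)"
  define vs' where "vs' = (if b then vs else [a]#vs)"
  have a1: "alt {[a]} Y True us'" "alt {[a]} Y True vs'" using assms by (auto simp: us'_def vs'_def)
  have p: "even (length us') = even (length vs')" using assms by (auto simp: us'_def vs'_def)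
  have c: "concat us' = concat vs'" using eq by (auto simp: us'_def vs'_def)
  have "us' = vs'"
  proof (cases "even (length us')")
    case True
    then show ?thesis using core[OF inj code a1] p c by blast
  next
    case False
    then have "us' \<noteq> []" "vs' \<noteq> []" using p by auto
    then obtain u1 u2 where U: "us' = u1 @ [u2]" and V: "\<exists>v1 v2. vs' = v1 @ [v2]"
      by (metis rev_exhaust)
    obtain v1 v2 where V: "vs' = v1 @ [v2]" using V by blast
    have "alt {[a]} Y True u1" "u2 = [a]" using a1(1) U False by (auto simp: alt_snoc)
    moreover have "alt {[a]} Y True v1" "v2 = [a]" using a1(2) V False p by (auto simp: alt_snoc)
    moreover have "even (length u1)" "even (length v1)" using U V False p by auto
    moreover have "concat u1 = concat v1" using c U V calculation by simp
    ultimately show ?thesis using core[OF inj code] U V by metis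
  qed
  then show ?thesis by (auto simp: us'_def vs'_def split: if_splits)
qed

lemma case2:
  assumes inj: "inj_on (\<lambda>(x,y). x@y) (X\<times>{[a]})" and code: "is_code A (lang_prod X {[a]})"
    and "alt X {[a]} b us" "alt X {[a]} b vs" "even (length us) = even (length vs)"
    and ne: "us \<noteq> []" "vs \<noteq> []"
    and eq: "concat us = concat vs"
  shows "us = vs"
proof -
  define us' where "us' = (if b then us else tl us)"
  define vs' where "vs' = (if b then vs else tl vs)"
  have a1: "alt X {[a]} True us'" "alt X {[a]} True vs'" using assms
    by (auto simp: us'_def vs'_def neq_Nil_conv)
  have p: "even (length us') = even (length vs')" using assms by (auto simp: us'_def vs'_def)
  have hd: "\<not> b \<Longrightarrow> hd us = [a] \<and> hd vs = [a]" using assms by (auto simp: neq_Nil_conv)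
  have c: "concat us' = concat vs'"
  proof (cases b)
    case False
    then have "concat us = [a] @ concat (tl us)" "concat vs = [a] @ concat (tl vs)"
      using hd ne by (metis concat.simps(2) list.collapse)+
    then show ?thesis using eq False by (simp add: us'_def vs'_def)
  qed (use eq in \<open>simp add: us'_def vs'_def\<close>)
  define us'' where "us'' = (if even (length us') then us' else us' @ [[a]])"
  define vs'' where "vs'' = (if even (length vs') then vs' else vs' @ [[a]])"
  have "alt X {[a]} True us''" "alt X {[a]} True vs''"
    using a1 by (auto simp: us''_def vs''_def alt_snoc)
  moreover have "even (length us'')" "even (length vs'')" by (auto simp: us''_def vs''_def)
  moreover have "concat us'' = concat vs''" using c p by (auto simp: us''_def vs''_def)
  ultimately have "us'' = vs''" using core[OF inj code] by blast
  then have "us' = vs'" using p by (auto simp: us''_def vs''_def split: if_splits)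
  then show ?thesis using ne by (auto simp: us'_def vs'_def split: if_splits)
    (metis hd list.collapse)
qed

theorem corollaryC:
  fixes A :: "'a set" and Z :: "'a list set"
  assumes "finite A"
    and "is_code A Z"
    and "Z \<noteq> {}"
    and "\<forall>z\<in>Z. length z \<ge> 2"
    and "(\<exists>a\<in>A. \<forall>z\<in>Z. hd z = a) \<or> (\<exists>a\<in>A. \<forall>z\<in>Z. last z = a)"
  shows "alt_induced_code A Z"
  using assms(5)
proof
  assume "\<exists>a\<in>A. \<forall>z\<in>Z. hd z = a"
  then obtain a where a: "a \<in> A" "\<forall>z\<in>Z. hd z = a" by blast
  define Y where "Y = tl ` Z"
  have zZ: "\<And>z. z \<in> Z \<Longrightarrow> z = [a] @ tl z"
  proof -
    fix z assume z: "z \<in> Z"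
    then show "z = [a] @ tl z" using a(2) assms(4) by (cases z) auto
  qed
  have Zeq: "Z = lang_prod {[a]} Y"
  proof
    show "Z \<subseteq> lang_prod {[a]} Y" unfolding lang_prod_def Y_def using zZ by blast
    show "lang_prod {[a]} Y \<subseteq> Z" unfolding lang_prod_def Y_def using zZ by force
  qed
  have pw: "Z \<subseteq> plus_words A" using assms(2) by (simp add: is_code_def)
  have "Y \<subseteq> plus_words A" unfolding Y_def plus_words_def
  proof safe
    fix z assume z: "z \<in> Z" "tl z = []"
    then show False using assms(4) by (cases z) auto
  next
    fix z x assume "z \<in> Z" "x \<in> set (tl z)"
    then show "x \<in> A" using pw by (auto simp: plus_words_def dest: list.set_sel(2)[rotated])
  qed
  moreover have "{[a]} \<subseteq> plus_words A" using a by (simp add: plus_words_def)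
  moreover have "Y \<noteq> {}" using assms(3) by (simp add: Y_def)
  moreover have inj: "inj_on (\<lambda>(x,y). x@y) ({[a]}\<times>Y)" by (auto simp: inj_on_def)
  moreover have code: "is_code A (lang_prod {[a]} Y)" using assms(2) Zeq by simp
  ultimately have "alternative_code A {[a]} Y"
    unfolding alternative_code_def alt_fact_alt using case1[OF inj code] by blast
  then show ?thesis unfolding alt_induced_code_def using Zeq by blast
next
  assume "\<exists>a\<in>A. \<forall>z\<in>Z. last z = a"
  then obtain a where a: "a \<in> A" "\<forall>z\<in>Z. last z = a" by blast
  define X where "X = butlast ` Z"
  have zZ: "\<And>z. z \<in> Z \<Longrightarrow> z = butlast z @ [a]"
  proof -
    fix z assume z: "z \<in> Z"
    then have "z \<noteq> []" using assms(4) by force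
    then show "z = butlast z @ [a]" using a(2) z by (metis append_butlast_last_id)
  qed
  have Zeq: "Z = lang_prod X {[a]}"
  proof
    show "Z \<subseteq> lang_prod X {[a]}" unfolding lang_prod_def X_def using zZ by blast
    show "lang_prod X {[a]} \<subseteq> Z" unfolding lang_prod_def X_def using zZ by force
  qed
  have pw: "Z \<subseteq> plus_words A" using assms(2) by (simp add: is_code_def)
  have "X \<subseteq> plus_words A" unfolding X_def plus_words_def
  proof safe
    fix z assume z: "z \<in> Z" "butlast z = []"
    have "length z \<ge> 2" using assms(4) z(1) by blast
    then show False using z(2) by (cases z rule: rev_cases) auto
  next
    fix z x assume "z \<in> Z" "x \<in> set (butlast z)"
    then show "x \<in> A" using pw by (auto simp: plus_words_def dest: in_set_butlastD)
  qed
  moreover have "{[a]} \<subseteq> plus_words A" using a by (simp add: plus_words_def)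
  moreover have "X \<noteq> {}" using assms(3) by (simp add: X_def)
  moreover have inj: "inj_on (\<lambda>(x,y). x@y) (X\<times>{[a]})" by (auto simp: inj_on_def)
  moreover have code: "is_code A (lang_prod X {[a]})" using assms(2) Zeq by simp
  moreover have "\<forall>b us vs. alt_fact X {[a]} b us \<and> alt_fact X {[a]} b vs \<and>
        even (length us) = even (length vs) \<and> concat us = concat vs \<longrightarrow> us = vs"
  proof (intro allI impI)
    fix b us vs assume H: "alt_fact X {[a]} b us \<and> alt_fact X {[a]} b vs \<and>
        even (length us) = even (length vs) \<and> concat us = concat vs"
    then have "us \<noteq> []" "vs \<noteq> []" unfolding alt_fact_alt by auto
    then show "us = vs" using H case2[OF inj code, of b us vs] unfolding alt_fact_alt by blast
  qed
  ultimately have "alternative_code A X {[a]}"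
    unfolding alternative_code_def by blast
  then show ?thesis unfolding alt_induced_code_def using Zeq by blast
qed

end
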